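(* Let $(E,\|\cdot\|)$ be a real Banach space and $\mathcal{C}\subset E$ a closed convex cone with $\mathbb{R}_+\mathcal{C}=\mathcal{C}$ and $\mathcal{C}\cap(-\mathcal{C})=\{0\}$. Assume: (H1) there are $\ell\in E'$ with $\|\ell\|=1$ and $K\in[1,\infty)$ with $\langle\ell,\phi\rangle\ge\frac1K\|\phi\|$ for all $\phi\in\mathcal{C}$; (H2) $\rho\in(0,1]$ is fixed such that $\mathcal{C}(\rho)=\{\phi\in\mathcal{C}:B(\phi,\rho\|\phi\|)\subset\mathcal{C}\}$ contains a nonzero element. Set $\mathcal{C}_{\ell=1}(\rho)=\{\phi\in\mathcal{C}(\rho):\langle\ell,\phi\rangle=1\}$. Let $\mathcal{M}\subset L(E)$ be such that, for some $1\le\vartheta<\infty$ and every $L\in\mathcal{M}$: (H3) $L(\mathcal{C}\setminus\{0\})\subset\mathcal{C}(\rho)\setminus\{0\}$, (H4) $\frac1\vartheta\le\|L\|\le\vartheta$. Let $(\Omega,\mathcal{F},\mathbb{P})$ be a probability space with an invertible, measure-preserving, ergodic map $\tau$, let $X=L^\infty(\Omega,E)$ (uniformly bounded Bochner measurable sections, sup norm), and let $(\mathcal{L}_\omega)_{\omega\in\Omega}$ take values in $\mathcal{M}$ such that $\mathbf{L}:X\to X$, $(\mathbf{L}\boldsymbol{\phi})_\omega=\mathcal{L}_{\tau^{-1}\omega}\phi_{\tau^{-1}\omega}$, preserves Bochner measurability of sections, and assume $\int_\Omega|\log\|\mathcal{L}_\omega\||\,d\mathbb{P}(\omega)<+\infty$.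 Let $\mathbf{f}\in X$ be the unique section with $f_\omega\in\mathcal{C}_{\ell=1}(\rho)$ for all $\omega$ satisfying $f_\omega=\mathcal{L}_{\tau^{-1}\omega}f_{\tau^{-1}\omega}/\langle\ell,\mathcal{L}_{\tau^{-1}\omega}f_{\tau^{-1}\omega}\rangle$ for all $\omega$. Set $p_\omega=\langle\ell,\mathcal{L}_{\tau^{-1}\omega}f_{\tau^{-1}\omega}\rangle$. Then: (1) $\omega\mapsto p_\omega\in(0,\infty)$ is measurable and $\log p$ is $\mathbb{P}$-integrable; (2) for $\mathbb{P}$-almost every $\omega$, the characteristic exponent \[\chi_\omega=\limsup_{n\to\infty}\frac1n\log\|\mathcal{L}_{\tau^{-1}\omega}\circ\cdots\circ\mathcal{L}_{\tau^{-n}\omega}\|\] equals $\int_\Omega\log p_\omega\,d\mathbb{P}(\omega)$.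
   Context: A map $\Omega\to E$ is Bochner measurable if it is a uniform limit of $\mathcal{F}$-measurable maps with countable image. *)

theory Defs
  imports "HOL-Probability.Probability"
begin

definition measure_preserving_map :: "'w measure \<Rightarrow> ('w \<Rightarrow> 'w) \<Rightarrow> bool" where
  "measure_preserving_map M T \<longleftrightarrow> T \<in> measurable M M \<and>
     (\<forall>A\<in>sets M. emeasure M (T -` A \<inter> space M) = emeasure M A)"

definition ergodic_map :: "'w measure \<Rightarrow> ('w \<Rightarrow> 'w) \<Rightarrow> bool" where
  "ergodic_map M T \<longleftrightarrow> (\<forall>A\<in>sets M. T -` A \<inter> space M = A \<longrightarrow>
     measure M A = 0 \<or> measure M A = 1)"

definition bochner_measurable :: "'w measure \<Rightarrow> ('w \<Rightarrow> 'e::real_normed_vector) \<Rightarrow> bool" where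
  "bochner_measurable M f \<longleftrightarrow> (\<exists>g :: nat \<Rightarrow> 'w \<Rightarrow> 'e.
     (\<forall>n. g n \<in> borel_measurable M \<and> countable (g n ` space M)) \<and>
     (\<forall>e>0. \<exists>N. \<forall>n\<ge>N. \<forall>\<omega>\<in>space M. dist (g n \<omega>) (f \<omega>) < e))"

definition Linf_sections :: "'w measure \<Rightarrow> ('w \<Rightarrow> 'e::real_normed_vector) set" where
  "Linf_sections M = {\<phi>. bochner_measurable M \<phi> \<and> bounded (\<phi> ` space M)}"

definition cone_rho :: "'e::real_normed_vector set \<Rightarrow> real \<Rightarrow> 'e set" where
  "cone_rho C \<rho> = {\<phi>\<in>C. ball \<phi> (\<rho> * norm \<phi>) \<subseteq> C}"

definition cone_rho_l1 :: "'e::real_normed_vector set \<Rightarrow> real \<Rightarrow> ('e \<Rightarrow>\<^sub>L real) \<Rightarrow> 'e set" where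
  "cone_rho_l1 C \<rho> l = {\<phi>\<in>cone_rho C \<rho>. blinfun_apply l \<phi> = 1}"

fun cocycle :: "('w \<Rightarrow> ('e::real_normed_vector \<Rightarrow>\<^sub>L 'e)) \<Rightarrow> ('w \<Rightarrow> 'w) \<Rightarrow> nat \<Rightarrow> 'w \<Rightarrow> ('e \<Rightarrow>\<^sub>L 'e)" where
  "cocycle L Ti 0 \<omega> = id_blinfun"
| "cocycle L Ti (Suc n) \<omega> = cocycle L Ti n \<omega> o\<^sub>L L ((Ti ^^ Suc n) \<omega>)"

end

theory Submission
  imports Defs
begin


lemma funpow_meas:
  assumes "T \<in> measurable M M" shows "(T ^^ k) \<in> measurable M M"
proof (induction k)
  case 0 then show ?case by simp
next
  case (Suc k) then show ?case by (simp add: measurable_compose[OF _ assms])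
qed

lemma mp_int:
  assumes T: "T \<in> measurable M M" and D: "distr M M T = M" and F: "integrable M (F :: _ \<Rightarrow> real)"
  shows "integrable M (\<lambda>x. F (T x))" "integral\<^sup>L M (\<lambda>x. F (T x)) = integral\<^sup>L M F"
proof -
  have Fm: "F \<in> borel_measurable M" using F by auto
  show "integrable M (\<lambda>x. F (T x))"
    using integrable_distr_eq[OF T Fm] D F by simp
  show "integral\<^sup>L M (\<lambda>x. F (T x)) = integral\<^sup>L M F"
    using integral_distr[OF T Fm] D by simp
qed

lemma mp_int_pow:
  assumes T: "T \<in> measurable M M" and D: "distr M M T = M" and F: "integrable M (F :: _ \<Rightarrow> real)"
  shows "integrable M (\<lambda>x. F ((T ^^ k) x))"
proof (induction k)
  case 0 then show ?case using F by simp
next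
  case (Suc k)
  from mp_int(1)[OF T D Suc] show ?case by (simp add: funpow_Suc_right del: funpow.simps)
qed

definition Ssum :: "('a \<Rightarrow> 'a) \<Rightarrow> ('a \<Rightarrow> real) \<Rightarrow> nat \<Rightarrow> 'a \<Rightarrow> real" where
  "Ssum T h n x = (\<Sum>k<n. h ((T ^^ k) x))"

lemma Ssum_Suc: "Ssum T h (Suc j) x = h x + Ssum T h j (T x)"
  unfolding Ssum_def sum.lessThan_Suc_shift by (simp add: funpow_Suc_right del: funpow.simps)

fun Mx :: "('a \<Rightarrow> 'a) \<Rightarrow> ('a \<Rightarrow> real) \<Rightarrow> nat \<Rightarrow> 'a \<Rightarrow> real" where
  "Mx T h 0 x = 0"
| "Mx T h (Suc n) x = max (Mx T h n x) (Ssum T h (Suc n) x)"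

lemma Mx_nonneg: "0 \<le> Mx T h n x"
  by (induction n) auto

lemma Mx_ge: "k \<le> n \<Longrightarrow> Ssum T h k x \<le> Mx T h n x"
proof (induction n)
  case 0 then show ?case by (simp add: Ssum_def)
next
  case (Suc n) then show ?case by (cases "k = Suc n") auto
qed

lemma Mx_attained: "\<exists>k\<le>n. Mx T h n x = Ssum T h k x"
proof (induction n)
  case 0 then show ?case by (simp add: Ssum_def)
next
  case (Suc n)
  then obtain k where k: "k \<le> n" "Mx T h n x = Ssum T h k x" by blast
  show ?case
  proof (cases "Mx T h n x \<le> Ssum T h (Suc n) x")
    case True
    then have "Mx T h (Suc n) x = Ssum T h (Suc n) x" by (simp only: Mx.simps max_def if_True)
    then show ?thesis by blast
  next
    case False
    then have "Mx T h (Suc n) x = Ssum T h k x" using k by (simp only: Mx.simps max_def if_False)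
    then show ?thesis using k(1) le_SucI by blast
  qed
qed

lemma Mx_step: "0 < Mx T h n x \<Longrightarrow> Mx T h n x \<le> h x + Mx T h n (T x)"
proof -
  assume pos: "0 < Mx T h n x"
  obtain k where k: "k \<le> n" "Mx T h n x = Ssum T h k x" using Mx_attained[of n T h x] by blast
  have "k \<noteq> 0"
  proof
    assume "k = 0"
    with k pos show False by (simp add: Ssum_def)
  qed
  then obtain j where j: "k = Suc j" by (cases k) auto
  have "Ssum T h j (T x) \<le> Mx T h n (T x)" using k j by (intro Mx_ge) auto
  then show ?thesis using k j Ssum_Suc[of T h j x] by simp
qed

context
  fixes M T and h :: "'a \<Rightarrow> real"
  assumes T: "T \<in> measurable M M" and D: "distr M M T = M" and h: "integrable M h"
begin

lemma Ssum_int: "integrable M (Ssum T h n)"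
proof -
  have "\<And>k. integrable M (\<lambda>x. h ((T^^k) x))" by (rule mp_int_pow[OF T D h])
  then show ?thesis unfolding Ssum_def by (intro Bochner_Integration.integrable_sum) blast
qed

lemma Mx_int: "integrable M (Mx T h n)"
  by (induction n) (auto intro: Ssum_int)

lemma Ssum_meas[measurable]: "Ssum T h n \<in> borel_measurable M"
  using Ssum_int by auto

lemma Mx_meas[measurable]: "Mx T h n \<in> borel_measurable M"
  using Mx_int by auto

lemma maximal_ergodic:
  "0 \<le> integral\<^sup>L M (\<lambda>x. indicator {x\<in>space M. \<exists>n. 0 < Ssum T h n x} x * h x)"
proof -
  define A where "A n = {x\<in>space M. 0 < Mx T h n x}" for n
  define Ainf where "Ainf = {x\<in>space M. \<exists>n. 0 < Ssum T h n x}"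
  have hm[measurable]: "h \<in> borel_measurable M" using h by auto
  have Asets[measurable]: "A n \<in> sets M" for n unfolding A_def by measurable
  have Ainf[measurable]: "Ainf \<in> sets M" unfolding Ainf_def by measurable
  have step: "0 \<le> integral\<^sup>L M (\<lambda>x. indicator (A n) x * h x)" for n
  proof -
    have "integral\<^sup>L M (\<lambda>x. Mx T h n x - Mx T h n (T x)) \<le> integral\<^sup>L M (\<lambda>x. indicator (A n) x * h x)"
    proof (rule integral_mono)
      show "integrable M (\<lambda>x. Mx T h n x - Mx T h n (T x))"
        using Mx_int mp_int(1)[OF T D Mx_int] by auto
      show "integrable M (\<lambda>x. indicator (A n) x * h x)"
        using integrable_mult_indicator[OF Asets h] by simp
      fix x assume "x \<in> space M"
      show "Mx T h n x - Mx T h n (T x) \<le> indicator (A n) x * h x"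
      proof (cases "x \<in> A n")
        case True then show ?thesis using Mx_step[of T h n x] by (auto simp: A_def)
      next
        case False then show ?thesis using \<open>x \<in> space M\<close> Mx_nonneg[of T h n x] Mx_nonneg[of T h n "T x"]
          by (auto simp: A_def)
      qed
    qed
    moreover have "integral\<^sup>L M (\<lambda>x. Mx T h n x - Mx T h n (T x)) = 0"
      using Mx_int mp_int[OF T D Mx_int] by (simp add: Bochner_Integration.integral_diff)
    ultimately show ?thesis by simp
  qed
  have lim: "(\<lambda>n. integral\<^sup>L M (\<lambda>x. indicator (A n) x * h x)) \<longlonglongrightarrow> integral\<^sup>L M (\<lambda>x. indicator Ainf x * h x)"
  proof (rule integral_dominated_convergence[where w="\<lambda>x. norm (h x)"])
    show "(\<lambda>x. indicator Ainf x * h x) \<in> borel_measurable M" by measurable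
    show "(\<lambda>x. indicator (A n) x * h x) \<in> borel_measurable M" for n by measurable
    show "integrable M (\<lambda>x. norm (h x))" using h by auto
    show "AE x in M. norm (indicator (A n) x * h x) \<le> norm (h x)" for n
      by (auto split: split_indicator)
    show "AE x in M. (\<lambda>n. indicator (A n) x * h x) \<longlonglongrightarrow> indicator Ainf x * h x"
    proof (rule AE_I2)
      fix x assume x: "x \<in> space M"
      show "(\<lambda>n. indicator (A n) x * h x) \<longlonglongrightarrow> indicator Ainf x * h x"
      proof (cases "x \<in> Ainf")
        case True
        then obtain k where k: "0 < Ssum T h k x" by (auto simp: Ainf_def)
        have "eventually (\<lambda>n. indicator (A n) x * h x = indicator Ainf x * h x) sequentially"
          unfolding eventually_sequentially
        proof (intro exI allI impI)
          fix n assume "k \<le> n"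
          then have "0 < Mx T h n x" using Mx_ge[of k n T h x] k by simp
          then show "indicator (A n) x * h x = indicator Ainf x * h x" using True x by (simp add: A_def)
        qed
        then show ?thesis by (rule tendsto_eventually)
      next
        case False
        have "indicator (A n) x * h x = indicator Ainf x * h x" for n
        proof -
          obtain k where "Mx T h n x = Ssum T h k x" using Mx_attained[of n T h x] by blast
          then have "x \<notin> A n" using False x by (auto simp: A_def Ainf_def)
          then show ?thesis using False by simp
        qed
        then have "(\<lambda>n. indicator (A n) x * h x) = (\<lambda>n. indicator Ainf x * h x)" by (intro ext)
        then show ?thesis by simp
      qed
    qed
  qed
  have "0 \<le> integral\<^sup>L M (\<lambda>x. indicator Ainf x * h x)"
    using lim step by (intro LIMSEQ_le_const[OF lim]) auto
  then show ?thesis unfolding Ainf_def .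
qed

end


lemma birkhoff_bdd:
  assumes P: "prob_space M" and T: "T \<in> measurable M M" and D: "distr M M T = M"
   and erg: "\<forall>A\<in>sets M. T -` A \<inter> space M = A \<longrightarrow> measure M A = 0 \<or> measure M A = 1"
   and h: "integrable M h" and neg: "integral\<^sup>L M h < 0"
  shows "AE x in M. \<exists>B. \<forall>n. Ssum T h n x \<le> B"
proof -
  interpret prob_space M by (rule P)
  note [measurable] = Ssum_meas[OF T D h]
  have hm[measurable]: "h \<in> borel_measurable M" using h by auto
  define E where "E = {x\<in>space M. \<forall>B::nat. \<exists>n. real B < Ssum T h n x}"
  have Em[measurable]: "E \<in> sets M" unfolding E_def by measurable
  have Echar: "x \<in> E \<longleftrightarrow> \<not>(\<exists>B. \<forall>n. Ssum T h n x \<le> B)" if x: "x \<in> space M" for x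
  proof
    assume "x \<in> E"
    then have H: "\<forall>B::nat. \<exists>n. real B < Ssum T h n x" by (simp add: E_def)
    show "\<not>(\<exists>B. \<forall>n. Ssum T h n x \<le> B)"
    proof
      assume "\<exists>B. \<forall>n. Ssum T h n x \<le> B"
      then obtain B where B: "\<forall>n. Ssum T h n x \<le> B" by blast
      obtain N :: nat where "B \<le> real N" using real_arch_simple by blast
      with H B show False by (meson not_le order_trans)
    qed
  next
    assume "\<not>(\<exists>B. \<forall>n. Ssum T h n x \<le> B)"
    then have "\<forall>B::nat. \<exists>n. real B < Ssum T h n x" by (meson not_le)
    then show "x \<in> E" using x by (simp add: E_def)
  qed
  have bnd_iff: "(\<exists>B. \<forall>n. Ssum T h n (T x) \<le> B) \<longleftrightarrow> (\<exists>B. \<forall>n. Ssum T h n x \<le> B)" for x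
  proof
    assume "\<exists>B. \<forall>n. Ssum T h n (T x) \<le> B"
    then obtain B where B: "\<forall>n. Ssum T h n (T x) \<le> B" by blast
    have "Ssum T h n x \<le> max 0 (h x + B)" for n
    proof (cases n)
      case 0 then show ?thesis by (simp add: Ssum_def)
    next
      case (Suc j)
      have "Ssum T h j (T x) \<le> B" using B by blast
      then show ?thesis using Ssum_Suc[of T h j x] Suc by simp
    qed
    then show "\<exists>B. \<forall>n. Ssum T h n x \<le> B" by blast
  next
    assume "\<exists>B. \<forall>n. Ssum T h n x \<le> B"
    then obtain B where B: "\<forall>n. Ssum T h n x \<le> B" by blast
    have "Ssum T h n (T x) \<le> B - h x" for n
      using Ssum_Suc[of T h n x] B[rule_format, of "Suc n"] by simp
    then show "\<exists>B. \<forall>n. Ssum T h n (T x) \<le> B" by blast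
  qed
  have inv: "T -` E \<inter> space M = E"
  proof (intro set_eqI iffI)
    fix x assume "x \<in> T -` E \<inter> space M"
    then have x: "x \<in> space M" "T x \<in> E" by auto
    have "T x \<in> space M" using measurable_space[OF T x(1)] .
    then show "x \<in> E" using x Echar bnd_iff by blast
  next
    fix x assume xE: "x \<in> E"
    then have x: "x \<in> space M" by (simp add: E_def)
    have Tx: "T x \<in> space M" using measurable_space[OF T x] .
    show "x \<in> T -` E \<inter> space M" using x Tx xE Echar bnd_iff by blast
  qed
  have m01: "measure M E = 0 \<or> measure M E = 1" using erg Em inv by blast
  have "measure M E \<noteq> 1"
  proof
    assume E1: "measure M E = 1"
    define A where "A = {x\<in>space M. \<exists>n. 0 < Ssum T h n x}"
    have Am[measurable]: "A \<in> sets M" unfolding A_def by measurable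
    have "E \<subseteq> A"
    proof
      fix x assume "x \<in> E"
      then have "x \<in> space M" "\<exists>n. real (0::nat) < Ssum T h n x" unfolding E_def by blast+
      then show "x \<in> A" unfolding A_def by simp
    qed
    then have "1 \<le> measure M A" using E1 finite_measure_mono[OF _ Am] by metis
    then have "prob A = 1" using prob_le_1[of A] by simp
    then have ae: "AE x in M. x \<in> A" by (rule AE_prob_1)
    have "integral\<^sup>L M (\<lambda>x. indicator A x * h x) = integral\<^sup>L M h"
      by (rule integral_cong_AE) (use ae in auto)
    moreover have "0 \<le> integral\<^sup>L M (\<lambda>x. indicator A x * h x)"
      using maximal_ergodic[OF T D h] unfolding A_def .
    ultimately show False using neg by simp
  qed
  with m01 have E0: "measure M E = 0" by simp
  have "E \<in> null_sets M" using E0 Em by (simp add: emeasure_eq_measure null_sets_def)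
  then show ?thesis
    by (rule AE_I') (auto simp: Echar)
qed



lemma cone_norm_bound:
  fixes C :: "'e::real_normed_vector set" and G :: "'e \<Rightarrow>\<^sub>L 'e" and l :: "'e \<Rightarrow>\<^sub>L real"
  assumes scale: "\<forall>x\<in>C. \<forall>c\<ge>0. c *\<^sub>R x \<in> C" and K: "K > 0"
    and H1: "\<forall>\<phi>\<in>C. blinfun_apply l \<phi> \<ge> norm \<phi> / K"
    and rho: "0 < \<rho>" and g: "g \<in> cone_rho C \<rho>" "1 \<le> norm g"
    and GC: "\<forall>x\<in>C. blinfun_apply G x \<in> C"
  shows "norm G \<le> 6 * K / \<rho> * l (G g)"
proof -
  have gC: "g \<in> C" and ball: "ball g (\<rho> * norm g) \<subseteq> C" using g by (auto simp: cone_rho_def)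
  have lK: "norm y \<le> K * l y" if "y \<in> C" for y
    using H1 that K by (auto simp: pos_divide_le_eq mult.commute)
  have GgC: "G g \<in> C" using GC gC by blast
  have lpos: "0 \<le> l y" if "y \<in> C" for y
  proof -
    have "0 \<le> K * l y" using lK[OF that] norm_ge_zero order_trans by blast
    then show ?thesis using K by (simp add: zero_le_mult_iff)
  qed
  have lG0: "0 \<le> l (G g)" using lpos[OF GgC] .
  show ?thesis
  proof (rule norm_blinfun_bound)
    show "0 \<le> 6 * K / \<rho> * l (G g)" using K rho lG0 by simp
    fix x
    show "norm (G x) \<le> 6 * K / \<rho> * l (G g) * norm x"
    proof (cases "x = 0")
      case True then show ?thesis by simp
    next
      case False
      define s where "s = 2 * norm x / \<rho>"
      have s: "s > 0" using False rho by (simp add: s_def)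
      have mem: "s *\<^sub>R g + y \<in> C" if y: "norm y = norm x" for y
      proof -
        have "norm ((1/s) *\<^sub>R y) = \<rho> / 2" using y s False rho by (simp add: s_def)
        also have "\<dots> < \<rho> * norm g"
        proof -
          have "\<rho> \<le> \<rho> * norm g" using rho g(2) by (simp add: mult_le_cancel_left1)
          then show ?thesis using rho by linarith
        qed
        finally have "g + (1/s) *\<^sub>R y \<in> ball g (\<rho> * norm g)" by (simp add: dist_norm)
        then have "g + (1/s) *\<^sub>R y \<in> C" using ball by blast
        then have "s *\<^sub>R (g + (1/s) *\<^sub>R y) \<in> C" using scale s by auto
        then show ?thesis using s by (simp add: scaleR_add_right)
      qed
      have C1: "s *\<^sub>R g + x \<in> C" using mem by simp
      have C2: "s *\<^sub>R g - x \<in> C" using mem[of "-x"] by simp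
      have a1: "0 \<le> s * l (G g) - l (G x)"
        using lpos[OF GC[rule_format, OF C2]]
        by (simp add: blinfun.add_right blinfun.scaleR_right blinfun.diff_right)
      have a2: "norm (G (s *\<^sub>R g) + G x) \<le> K * (s * l (G g) + l (G x))"
        using lK[OF GC[rule_format, OF C1]]
        by (simp add: blinfun.add_right blinfun.scaleR_right)
      have a3: "norm (G g) \<le> K * l (G g)" using lK[OF GgC] .
      have "norm (G x) = norm ((G (s *\<^sub>R g) + G x) - s *\<^sub>R G g)" by (simp add: blinfun.scaleR_right)
      also have "\<dots> \<le> norm (G (s *\<^sub>R g) + G x) + norm (s *\<^sub>R G g)" by (rule norm_triangle_ineq4)
      also have "\<dots> = norm (G (s *\<^sub>R g) + G x) + s * norm (G g)" using s by simp
      also have "\<dots> \<le> K * (s * l (G g) + l (G x)) + s * (K * l (G g))"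
        using a2 a3 s by (intro add_mono mult_left_mono) auto
      also have "\<dots> \<le> 3 * K * s * l (G g)"
      proof -
        have "K * l (G x) \<le> K * (s * l (G g))" using a1 K by (intro mult_left_mono) auto
        then show ?thesis by (simp add: algebra_simps)
      qed
      also have "\<dots> = 6 * K / \<rho> * l (G g) * norm x" using rho by (simp add: s_def field_simps)
      finally show ?thesis .
    qed
  qed
qed

lemma limsup_squeeze:
  fixes a s :: "nat \<Rightarrow> real"
  assumes D: "\<forall>n. \<bar>a n - s n\<bar> \<le> D"
   and up: "\<forall>m::nat. \<exists>B. \<forall>n. s n - real n * (I + 1/(real m+1)) \<le> B"
   and lo: "\<forall>m::nat. \<exists>B. \<forall>n. - s n - real n * (- I + 1/(real m+1)) \<le> B"
  shows "limsup (\<lambda>n. ereal (a n / real n)) = ereal I"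
proof -
  have U: "limsup (\<lambda>n. ereal (a n / real n)) \<le> ereal (I + 1/(real m+1))" for m :: nat
  proof -
    obtain B where B: "\<forall>n. s n - real n * (I + 1/(real m+1)) \<le> B" using up by blast
    define c where "c = I + 1/(real m+1)"
    have ev: "eventually (\<lambda>n. ereal (a n / real n) \<le> ereal (c + (B + D) / real n)) sequentially"
      unfolding eventually_sequentially
    proof (intro exI allI impI)
      fix n :: nat assume "1 \<le> n"
      then have n: "real n > 0" by simp
      have "a n \<le> real n * c + (B + D)" using B[rule_format, of n] D[rule_format, of n]
        unfolding c_def by linarith
      then have "a n / real n \<le> (real n * c + (B + D)) / real n" using n by (simp add: divide_right_mono)
      also have "\<dots> = c + (B + D) / real n" using n by (simp add: field_simps)
      finally show "ereal (a n / real n) \<le> ereal (c + (B + D) / real n)" by simp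
    qed
    have lim: "(\<lambda>n. ereal (c + (B + D) / real n)) \<longlonglongrightarrow> ereal c"
      using tendsto_add[OF tendsto_const lim_const_over_n[of "B + D"], of c] by simp
    have "limsup (\<lambda>n. ereal (c + (B + D) / real n)) = ereal c"
      by (rule lim_imp_Limsup[OF _ lim]) simp
    then show ?thesis using Limsup_mono[OF ev] unfolding c_def by simp
  qed
  have L: "ereal (I - 1/(real m+1)) \<le> limsup (\<lambda>n. ereal (a n / real n))" for m :: nat
  proof -
    obtain B where B: "\<forall>n. - s n - real n * (- I + 1/(real m+1)) \<le> B" using lo by blast
    define c where "c = I - 1/(real m+1)"
    have ev: "eventually (\<lambda>n. ereal (c - (B + D) / real n) \<le> ereal (a n / real n)) sequentially"
      unfolding eventually_sequentially
    proof (intro exI allI impI)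
      fix n :: nat assume "1 \<le> n"
      then have n: "real n > 0" by simp
      have "real n * c - (B + D) \<le> a n" using B[rule_format, of n] D[rule_format, of n]
        unfolding c_def by (simp add: algebra_simps)
      then have "(real n * c - (B + D)) / real n \<le> a n / real n" using n by (simp add: divide_right_mono)
      moreover have "(real n * c - (B + D)) / real n = c - (B + D) / real n" using n by (simp add: field_simps)
      ultimately show "ereal (c - (B + D) / real n) \<le> ereal (a n / real n)" by simp
    qed
    have lim: "(\<lambda>n. ereal (c - (B + D) / real n)) \<longlonglongrightarrow> ereal c"
      using tendsto_diff[OF tendsto_const lim_const_over_n[of "B + D"], of c] by simp
    have "limsup (\<lambda>n. ereal (c - (B + D) / real n)) = ereal c"
      by (rule lim_imp_Limsup[OF _ lim]) simp
    then show ?thesis using Limsup_mono[OF ev] unfolding c_def by simp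
  qed
  define X where "X = limsup (\<lambda>n. ereal (a n / real n))"
  have "X \<noteq> \<infinity>" using U[of 0] unfolding X_def by auto
  moreover have "X \<noteq> -\<infinity>" using L[of 0] unfolding X_def by auto
  ultimately obtain r where r: "X = ereal r" by (cases X) auto
  have r1: "r \<le> I + 1/(real m+1)" for m :: nat using U[of m] r unfolding X_def by simp
  have r2: "I - 1/(real m+1) \<le> r" for m :: nat using L[of m] r unfolding X_def by simp
  have "r = I"
  proof (rule ccontr)
    assume "r \<noteq> I"
    then have "0 < \<bar>r - I\<bar>" by simp
    then obtain n :: nat where n: "n > 0" "inverse (real n) < \<bar>r - I\<bar>"
      using ex_inverse_of_nat_less[of "\<bar>r - I\<bar>"] by blast
    have e: "1/(real (n - 1) + 1) = inverse (real n)" using n by (simp add: of_nat_diff field_simps)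
    have "r \<le> I + inverse (real n)" using r1[of "n - 1"] e by simp
    moreover have "I - inverse (real n) \<le> r" using r2[of "n - 1"] e by simp
    ultimately show False using n(2) by linarith
  qed
  then show ?thesis using r unfolding X_def by simp
qed

lemma cocycle_C:
  assumes "\<forall>k. \<forall>x\<in>C. blinfun_apply (L ((Ti^^k) w)) x \<in> C" "x \<in> C"
  shows "blinfun_apply (cocycle L Ti n w) x \<in> C"
  using assms(2)
proof (induction n arbitrary: x)
  case 0 then show ?case by simp
next
  case (Suc n)
  have "blinfun_apply (L ((Ti^^Suc n) w)) x \<in> C" using assms(1) Suc.prems by blast
  then show ?case using Suc.IH by simp
qed

lemma cocycle_f:
  assumes "\<forall>k. blinfun_apply (L ((Ti^^Suc k) w)) (f ((Ti^^Suc k) w)) = q ((Ti^^k) w) *\<^sub>R f ((Ti^^k) w)"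
  shows "blinfun_apply (cocycle L Ti n w) (f ((Ti^^n) w)) = (\<Prod>k<n. q ((Ti^^k) w)) *\<^sub>R f w"
proof (induction n)
  case 0 then show ?case by simp
next
  case (Suc n)
  have "blinfun_apply (cocycle L Ti (Suc n) w) (f ((Ti^^Suc n) w))
      = blinfun_apply (cocycle L Ti n w) (q ((Ti^^n) w) *\<^sub>R f ((Ti^^n) w))"
    using assms[rule_format, of n] by (simp del: funpow.simps)
  also have "\<dots> = q ((Ti^^n) w) *\<^sub>R ((\<Prod>k<n. q ((Ti^^k) w)) *\<^sub>R f w)"
    by (simp add: blinfun.scaleR_right Suc.IH del: funpow.simps)
  finally show ?case by (simp add: mult.commute del: funpow.simps)
qed



theorem theorem2p2:
  fixes C :: "'e::banach set" and l :: "'e \<Rightarrow>\<^sub>L real" and K \<rho> \<theta> :: real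
    and Ms :: "('e \<Rightarrow>\<^sub>L 'e) set"
    and P :: "'w measure" and \<tau> \<tau>i :: "'w \<Rightarrow> 'w"
    and L :: "'w \<Rightarrow> ('e \<Rightarrow>\<^sub>L 'e)" and f :: "'w \<Rightarrow> 'e"
  assumes cone_closed: "closed C" and cone_convex: "convex C"
    and cone_scale: "\<forall>x\<in>C. \<forall>c\<ge>0. c *\<^sub>R x \<in> C"
    and cone_pointed: "C \<inter> uminus ` C = {0}"
    and H1: "norm l = 1" "K \<ge> 1" "\<forall>\<phi>\<in>C. blinfun_apply l \<phi> \<ge> norm \<phi> / K"
    and H2: "0 < \<rho>" "\<rho> \<le> 1" "\<exists>\<phi>\<in>cone_rho C \<rho>. \<phi> \<noteq> 0"
    and theta: "1 \<le> \<theta>"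
    and H3: "\<forall>T\<in>Ms. blinfun_apply T ` (C - {0}) \<subseteq> cone_rho C \<rho> - {0}"
    and H4: "\<forall>T\<in>Ms. 1 / \<theta> \<le> norm T \<and> norm T \<le> \<theta>"
    and prob: "prob_space P"
    and tau_mp: "measure_preserving_map P \<tau>" and taui_mp: "measure_preserving_map P \<tau>i"
    and tau_inv: "\<forall>\<omega>\<in>space P. \<tau>i (\<tau> \<omega>) = \<omega> \<and> \<tau> (\<tau>i \<omega>) = \<omega>"
    and tau_erg: "ergodic_map P \<tau>"
    and L_in: "\<forall>\<omega>\<in>space P. L \<omega> \<in> Ms"
    and L_meas: "\<forall>\<phi>\<in>Linf_sections P.
        bochner_measurable P (\<lambda>\<omega>. blinfun_apply (L (\<tau>i \<omega>)) (\<phi> (\<tau>i \<omega>)))"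
    and L_int: "integrable P (\<lambda>\<omega>. \<bar>ln (norm (L \<omega>))\<bar>)"
    and f_X: "f \<in> Linf_sections P"
    and f_cone: "\<forall>\<omega>\<in>space P. f \<omega> \<in> cone_rho_l1 C \<rho> l"
    and f_eq: "\<forall>\<omega>\<in>space P. f \<omega> =
        (1 / blinfun_apply l (blinfun_apply (L (\<tau>i \<omega>)) (f (\<tau>i \<omega>))))
          *\<^sub>R blinfun_apply (L (\<tau>i \<omega>)) (f (\<tau>i \<omega>))"
  defines "p \<equiv> (\<lambda>\<omega>. blinfun_apply l (blinfun_apply (L (\<tau>i \<omega>)) (f (\<tau>i \<omega>))))"
  shows "(\<forall>\<omega>\<in>space P. p \<omega> > 0) \<and> p \<in> borel_measurable P
         \<and> integrable P (\<lambda>\<omega>. ln (p \<omega>))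
         \<and> (AE \<omega> in P. limsup (\<lambda>n. ereal (ln (norm (cocycle L \<tau>i n \<omega>)) / real n))
                          = ereal (\<integral>\<omega>. ln (p \<omega>) \<partial>P))"
proof -
  interpret prob_space P by (rule prob)
  have tim: "\<tau>i \<in> measurable P P" using taui_mp by (simp add: measure_preserving_map_def)
  have tm: "\<tau> \<in> measurable P P" using tau_mp by (simp add: measure_preserving_map_def)
  have Dti: "distr P P \<tau>i = P"
  proof (rule measure_eqI)
    show "sets (distr P P \<tau>i) = sets P" by simp
    fix A assume "A \<in> sets (distr P P \<tau>i)"
    then have A: "A \<in> sets P" by simp
    show "emeasure (distr P P \<tau>i) A = emeasure P A"
      using emeasure_distr[OF tim A] taui_mp A by (simp add: measure_preserving_map_def)
  qed
  have erg_i: "\<forall>A\<in>sets P. \<tau>i -` A \<inter> space P = A \<longrightarrow> measure P A = 0 \<or> measure P A = 1"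
  proof (intro ballI impI)
    fix A assume A: "A \<in> sets P" and inv: "\<tau>i -` A \<inter> space P = A"
    have "\<tau> -` A \<inter> space P = A"
    proof (intro set_eqI iffI)
      fix x assume "x \<in> \<tau> -` A \<inter> space P"
      then have x: "x \<in> space P" "\<tau> x \<in> A" by auto
      have "\<tau> x \<in> space P" using measurable_space[OF tm x(1)] .
      then have "\<tau>i (\<tau> x) \<in> A" using x inv by blast
      then show "x \<in> A" using tau_inv x by simp
    next
      fix x assume xA: "x \<in> A"
      then have x: "x \<in> space P" using sets.sets_into_space[OF A] by blast
      have Tx: "\<tau> x \<in> space P" using measurable_space[OF tm x] .
      have "\<tau>i (\<tau> x) \<in> A" using tau_inv x xA by simp
      then have "\<tau> x \<in> A" using Tx inv by blast
      then show "x \<in> \<tau> -` A \<inter> space P" using x by simp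
    qed
    then show "measure P A = 0 \<or> measure P A = 1" using tau_erg A by (simp add: ergodic_map_def)
  qed
  have Kpos: "K > 0" using H1 by simp
  have lK: "norm y \<le> K * l y" if "y \<in> C" for y
    using H1(3) that Kpos by (auto simp: pos_divide_le_eq mult.commute)
  have zC: "0 \<in> C" using cone_pointed by blast
  have spi: "\<tau>i w \<in> space P" if "w \<in> space P" for w using measurable_space[OF tim that] .
  have spk: "(\<tau>i ^^ k) w \<in> space P" if "w \<in> space P" for w k
    using measurable_space[OF funpow_meas[OF tim] that] .
  have fC: "f w \<in> C" "l (f w) = 1" "f w \<in> cone_rho C \<rho>" if "w \<in> space P" for w
    using f_cone that by (auto simp: cone_rho_l1_def cone_rho_def)
  have fn1: "1 \<le> norm (f w)" if "w \<in> space P" for w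
  proof -
    have "\<bar>l (f w)\<bar> \<le> norm l * norm (f w)" using norm_blinfun[of l "f w"] by simp
    then show ?thesis using fC(2)[OF that] H1(1) by simp
  qed
  have fnK: "norm (f w) \<le> K" if "w \<in> space P" for w using lK[OF fC(1)[OF that]] fC(2)[OF that] by simp
  have LC: "\<forall>x\<in>C. blinfun_apply (L w) x \<in> C" if "w \<in> space P" for w
  proof
    fix x assume x: "x \<in> C"
    show "blinfun_apply (L w) x \<in> C"
    proof (cases "x = 0")
      case True then show ?thesis using zC by simp
    next
      case False
      then have "blinfun_apply (L w) x \<in> cone_rho C \<rho>" using H3 L_in that x by blast
      then show ?thesis by (simp add: cone_rho_def)
    qed
  qed
  have ppos: "p w > 0" if w: "w \<in> space P" for w
  proof -
    have "f (\<tau>i w) \<in> C - {0}" using fC[OF spi[OF w]] by auto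
    then have "blinfun_apply (L (\<tau>i w)) (f (\<tau>i w)) \<in> cone_rho C \<rho> - {0}"
      using H3 L_in spi[OF w] by blast
    then have y: "blinfun_apply (L (\<tau>i w)) (f (\<tau>i w)) \<in> C" "blinfun_apply (L (\<tau>i w)) (f (\<tau>i w)) \<noteq> 0"
      by (auto simp: cone_rho_def)
    have "0 < norm (blinfun_apply (L (\<tau>i w)) (f (\<tau>i w)))" using y(2) by simp
    then have "0 < K * p w" using lK[OF y(1)] unfolding p_def by linarith
    then show ?thesis using Kpos by (simp add: zero_less_mult_iff)
  qed
  have pup: "p w \<le> K * norm (L (\<tau>i w))" if w: "w \<in> space P" for w
  proof -
    have "p w \<le> norm l * norm (blinfun_apply (L (\<tau>i w)) (f (\<tau>i w)))"
      unfolding p_def using norm_blinfun[of l] by (metis abs_le_D1 real_norm_def)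
    also have "\<dots> \<le> norm (L (\<tau>i w)) * norm (f (\<tau>i w))" using H1(1) norm_blinfun by simp
    also have "\<dots> \<le> norm (L (\<tau>i w)) * K" using fnK[OF spi[OF w]] by (simp add: mult_left_mono)
    finally show ?thesis by (simp add: mult.commute)
  qed
  have plo: "norm (L (\<tau>i w)) \<le> 6 * K / \<rho> * p w" if w: "w \<in> space P" for w
    unfolding p_def
    by (rule cone_norm_bound[OF cone_scale Kpos H1(3) H2(1) fC(3)[OF spi[OF w]] fn1[OF spi[OF w]] LC[OF spi[OF w]]])
  have q_meas: "(\<lambda>w. blinfun_apply (L (\<tau>i w)) (f (\<tau>i w))) \<in> borel_measurable P"
  proof -
    have "bochner_measurable P (\<lambda>w. blinfun_apply (L (\<tau>i w)) (f (\<tau>i w)))" using L_meas f_X by blast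
    then obtain g :: "nat \<Rightarrow> _" where g: "\<forall>n. g n \<in> borel_measurable P"
      "\<forall>e>0. \<exists>N. \<forall>n\<ge>N. \<forall>w\<in>space P. dist (g n w) (blinfun_apply (L (\<tau>i w)) (f (\<tau>i w))) < e"
      unfolding bochner_measurable_def by blast
    show ?thesis
    proof (rule borel_measurable_LIMSEQ_metric[of g])
      show "g i \<in> borel_measurable P" for i using g(1) by blast
      fix w assume w: "w \<in> space P"
      show "(\<lambda>i. g i w) \<longlonglongrightarrow> blinfun_apply (L (\<tau>i w)) (f (\<tau>i w))"
        unfolding lim_sequentially using g(2) w by metis
    qed
  qed
  have p_meas[measurable]: "p \<in> borel_measurable P"
    unfolding p_def
    by (rule borel_measurable_continuous_on[OF _ q_meas]) (intro continuous_intros)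
  have lnp_meas[measurable]: "(\<lambda>w. ln (p w)) \<in> borel_measurable P" by measurable
  define D where "D = ln K + ln (6 * K / \<rho>)"
  have lnK: "0 \<le> ln K" using H1(2) by simp
  have ln6: "0 \<le> ln (6 * K / \<rho>)" using H1(2) H2(1,2) by (simp add: pos_le_divide_eq)
  have Lpos: "0 < norm (L (\<tau>i w))" if w: "w \<in> space P" for w
    using ppos[OF w] pup[OF w] Kpos by (smt (verit) mult_nonneg_nonpos norm_ge_zero)
  have lnp_bound: "\<bar>ln (p w)\<bar> \<le> \<bar>ln (norm (L (\<tau>i w)))\<bar> + D" if w: "w \<in> space P" for w
  proof -
    have "ln (p w) \<le> ln (K * norm (L (\<tau>i w)))" using pup[OF w] ppos[OF w] by simp
    also have "\<dots> = ln K + ln (norm (L (\<tau>i w)))" using Kpos Lpos[OF w] by (intro ln_mult_pos) auto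
    finally have u: "ln (p w) \<le> ln K + ln (norm (L (\<tau>i w)))" .
    have "0 < 6 * K / \<rho> * p w" using Kpos H2(1) ppos[OF w] by simp
    then have "ln (norm (L (\<tau>i w))) \<le> ln (6 * K / \<rho> * p w)" using plo[OF w] Lpos[OF w]
      by (subst ln_le_cancel_iff) auto
    also have "\<dots> = ln (6 * K / \<rho>) + ln (p w)" using Kpos H2(1) ppos[OF w] by (intro ln_mult_pos) auto
    finally have v: "ln (norm (L (\<tau>i w))) \<le> ln (6 * K / \<rho>) + ln (p w)" .
    show ?thesis using u v lnK ln6 unfolding D_def by linarith
  qed
  have Fi: "integrable P (\<lambda>w. \<bar>ln (norm (L (\<tau>i w)))\<bar>)" using mp_int(1)[OF tim Dti L_int] .
  have lnp_int: "integrable P (\<lambda>w. ln (p w))"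
  proof (rule Bochner_Integration.integrable_bound[where f="\<lambda>w. \<bar>ln (norm (L (\<tau>i w)))\<bar> + D"])
    show "integrable P (\<lambda>w. \<bar>ln (norm (L (\<tau>i w)))\<bar> + D)" using Fi by simp
    show "(\<lambda>w. ln (p w)) \<in> borel_measurable P" by measurable
    show "AE w in P. norm (ln (p w)) \<le> norm (\<bar>ln (norm (L (\<tau>i w)))\<bar> + D)"
      using lnp_bound lnK ln6 unfolding D_def by (intro AE_I2) (auto simp del: ln_le_cancel_iff ln_mult)
  qed
  define I where "I = (\<integral>w. ln (p w) \<partial>P)"
  have up: "AE w in P. \<forall>m::nat. \<exists>B. \<forall>n. Ssum \<tau>i (\<lambda>w. ln (p w) - (I + 1/(real m+1))) n w \<le> B"
    unfolding AE_all_countable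
  proof
    fix m :: nat
    show "AE w in P. \<exists>B. \<forall>n. Ssum \<tau>i (\<lambda>w. ln (p w) - (I + 1/(real m+1))) n w \<le> B"
    proof (rule birkhoff_bdd[OF prob tim Dti erg_i])
      show "integrable P (\<lambda>w. ln (p w) - (I + 1/(real m+1)))" using lnp_int by simp
      have "(\<integral>w. ln (p w) - (I + 1/(real m+1)) \<partial>P) = I - (I + 1/(real m+1))"
        using lnp_int unfolding I_def by (simp add: Bochner_Integration.integral_diff prob_space)
      then show "(\<integral>w. ln (p w) - (I + 1/(real m+1)) \<partial>P) < 0" by simp
    qed
  qed
  have lo: "AE w in P. \<forall>m::nat. \<exists>B. \<forall>n. Ssum \<tau>i (\<lambda>w. - ln (p w) - (- I + 1/(real m+1))) n w \<le> B"
    unfolding AE_all_countable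
  proof
    fix m :: nat
    show "AE w in P. \<exists>B. \<forall>n. Ssum \<tau>i (\<lambda>w. - ln (p w) - (- I + 1/(real m+1))) n w \<le> B"
    proof (rule birkhoff_bdd[OF prob tim Dti erg_i])
      show "integrable P (\<lambda>w. - ln (p w) - (- I + 1/(real m+1)))" using lnp_int by simp
      have "(\<integral>w. - ln (p w) - (- I + 1/(real m+1)) \<partial>P) = - I - (- I + 1/(real m+1))"
        using lnp_int unfolding I_def by (simp add: Bochner_Integration.integral_diff prob_space)
      then show "(\<integral>w. - ln (p w) - (- I + 1/(real m+1)) \<partial>P) < 0" by simp
    qed
  qed
  have main: "limsup (\<lambda>n. ereal (ln (norm (cocycle L \<tau>i n w)) / real n)) = ereal I"
    if w: "w \<in> space P"
    and upw: "\<forall>m::nat. \<exists>B. \<forall>n. Ssum \<tau>i (\<lambda>w. ln (p w) - (I + 1/(real m+1))) n w \<le> B"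
    and low: "\<forall>m::nat. \<exists>B. \<forall>n. Ssum \<tau>i (\<lambda>w. - ln (p w) - (- I + 1/(real m+1))) n w \<le> B" for w
  proof -
    define s where "s n = (\<Sum>k<n. ln (p ((\<tau>i^^k) w)))" for n
    have Ss1: "Ssum \<tau>i (\<lambda>w. ln (p w) - c) n w = s n - real n * c" for c n
      unfolding Ssum_def s_def by (simp add: sum_subtractf)
    have Ss2: "Ssum \<tau>i (\<lambda>w. - ln (p w) - c) n w = - s n - real n * c" for c n
      unfolding Ssum_def s_def by (simp add: sum_subtractf sum_negf)
    have step: "\<forall>k. blinfun_apply (L ((\<tau>i^^Suc k) w)) (f ((\<tau>i^^Suc k) w)) = p ((\<tau>i^^k) w) *\<^sub>R f ((\<tau>i^^k) w)"
    proof
      fix k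
      define v where "v = (\<tau>i^^k) w"
      have v: "v \<in> space P" using spk[OF w] unfolding v_def .
      have "f v = (1 / p v) *\<^sub>R blinfun_apply (L (\<tau>i v)) (f (\<tau>i v))" using f_eq v unfolding p_def by blast
      then have "p v *\<^sub>R f v = blinfun_apply (L (\<tau>i v)) (f (\<tau>i v))" using ppos[OF v] by simp
      then show "blinfun_apply (L ((\<tau>i^^Suc k) w)) (f ((\<tau>i^^Suc k) w)) = p ((\<tau>i^^k) w) *\<^sub>R f ((\<tau>i^^k) w)"
        unfolding v_def by simp
    qed
    have Dn: "\<bar>ln (norm (cocycle L \<tau>i n w)) - s n\<bar> \<le> D" for n
    proof -
      define G where "G = cocycle L \<tau>i n w"
      define g where "g = f ((\<tau>i^^n) w)"
      define Pi where "Pi = (\<Prod>k<n. p ((\<tau>i^^k) w))"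
      have gsp: "(\<tau>i^^n) w \<in> space P" using spk[OF w] .
      have Pipos: "0 < Pi" unfolding Pi_def using ppos spk[OF w] by (intro prod_pos) blast
      have sPi: "s n = ln Pi" unfolding s_def Pi_def
        using ppos spk[OF w] by (subst ln_prod) (auto, metis less_irrefl)
      have Gg: "blinfun_apply G g = Pi *\<^sub>R f w" unfolding G_def g_def Pi_def by (rule cocycle_f[OF step])
      have LCk: "\<forall>k. \<forall>x\<in>C. blinfun_apply (L ((\<tau>i^^k) w)) x \<in> C"
      proof
        fix k show "\<forall>x\<in>C. blinfun_apply (L ((\<tau>i^^k) w)) x \<in> C" by (rule LC[OF spk[OF w]])
      qed
      have GC: "\<forall>x\<in>C. blinfun_apply G x \<in> C" unfolding G_def
      proof
        fix x assume "x \<in> C" then show "blinfun_apply (cocycle L \<tau>i n w) x \<in> C" by (rule cocycle_C[OF LCk])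
      qed
      have upG: "norm G \<le> 6 * K / \<rho> * l (blinfun_apply G g)"
        unfolding g_def by (rule cone_norm_bound[OF cone_scale Kpos H1(3) H2(1) fC(3)[OF gsp] fn1[OF gsp] GC])
      then have upG': "norm G \<le> 6 * K / \<rho> * Pi" using Gg fC(2)[OF w] by (simp add: blinfun.scaleR_right)
      have "Pi \<le> Pi * norm (f w)" using Pipos fn1[OF w] by simp
      also have "\<dots> = norm (blinfun_apply G g)" using Gg Pipos by simp
      also have "\<dots> \<le> norm G * norm g" by (rule norm_blinfun)
      also have "\<dots> \<le> norm G * K" unfolding g_def using fnK[OF gsp] by (simp add: mult_left_mono)
      finally have loG: "Pi \<le> norm G * K" .
      have Gpos: "0 < norm G"
      proof (rule ccontr)
        assume "\<not> 0 < norm G"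
        then have "norm G = 0" by simp
        with loG Pipos show False by simp
      qed
      have "0 < 6 * K / \<rho> * Pi" using Kpos H2(1) Pipos by simp
      then have "ln (norm G) \<le> ln (6 * K / \<rho> * Pi)" using upG' Gpos by (subst ln_le_cancel_iff) auto
      also have "\<dots> = ln (6 * K / \<rho>) + ln Pi" using Kpos H2(1) Pipos by (intro ln_mult_pos) auto
      finally have a: "ln (norm G) \<le> ln (6 * K / \<rho>) + ln Pi" .
      have "0 < norm G * K" using Gpos Kpos by simp
      then have "ln Pi \<le> ln (norm G * K)" using loG Pipos by (subst ln_le_cancel_iff) auto
      also have "\<dots> = ln (norm G) + ln K" using Kpos Gpos by (intro ln_mult_pos) auto
      finally have b: "ln Pi \<le> ln (norm G) + ln K" .
      show ?thesis using a b lnK ln6 sPi unfolding D_def G_def[symmetric] by linarith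
    qed
    show ?thesis
    proof (rule limsup_squeeze[where s=s and D=D])
      show "\<forall>n. \<bar>ln (norm (cocycle L \<tau>i n w)) - s n\<bar> \<le> D" using Dn by blast
      show "\<forall>m::nat. \<exists>B. \<forall>n. s n - real n * (I + 1/(real m+1)) \<le> B" using upw by (simp add: Ss1)
      show "\<forall>m::nat. \<exists>B. \<forall>n. - s n - real n * (- I + 1/(real m+1)) \<le> B" using low by (simp add: Ss2)
    qed
  qed
  have ae: "AE w in P. limsup (\<lambda>n. ereal (ln (norm (cocycle L \<tau>i n w)) / real n)) = ereal I"
    using AE_space up lo by eventually_elim (rule main)
  have "\<forall>w\<in>space P. p w > 0" using ppos by blast
  then show ?thesis using p_meas lnp_int ae unfolding I_def by (intro conjI)
qed


end
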